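(* Let $L_x, L_y>0$, $L_{xy}\geq 0$, $0<\mu_x\le L_x$, $0<\mu_y\le L_y$, and let $F\in\mathcal{F}(L_x, L_y, L_{xy}, \mu_x, \mu_y)$ (defined in the context). Set $L=\max\{L_x, L_y\}$, $\mu=\min\{\mu_x, \mu_y\}>0$, and define $\alpha:\left[0, \tfrac{2\mu}{\mu L+L_{xy}^2}\right]\to\mathbb{R}$ by $$ \alpha(t)=1+\tfrac{1}{2}\left(L^2+\mu^2+2L_{xy}^2\right)t^2-(L+\mu)t +\tfrac{1}{2}(L-\mu)t\sqrt{(Lt + \mu t - 2)^2 + 4L_{xy}^2t^2} $$ (the bound factor for one step of the gradient descent-ascent method $x^{2}=x^1-t\nabla_x F(x^1, y^1)$, $y^{2}=y^1+t\nabla_y F(x^1, y^1)$, in the inequality $\|x^2-x^\star\|^2+\|y^2-y^\star\|^2\leq\alpha(t)(\|x^1-x^\star\|^2+\|y^1-y^\star\|^2)$, where $(x^\star,y^\star)$ is the saddle point of $F$). Then the minimizer of $\alpha$ over its domain (the optimal step length with respect to this bound) is $$ t^\star=\tfrac{2\left((L+\mu)\sqrt{L_{xy}^2+L\mu}+L_{xy}(\mu-L)\right)} {\left(4L_{xy}^2+(L+\mu)^2\right)\sqrt{L_{xy}^2+L\mu}}, $$ and $$ \alpha(t^\star)=\tfrac{8 L_{xy} \left(L^2-\mu^2\right) \sqrt{L \mu+L_{xy}^2}+\left(L^2-\mu^2\right)^2+16 L_{xy}^2 \left(L \mu+L_{xy}^2\right)}{\left((L+\mu)^2+4 L_{xy}^2\right)^2}.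 $$
   Context: $\mathcal{F}(L_x, L_y, L_{xy}, \mu_x, \mu_y)$ denotes the set of differentiable $F:\mathbb{R}^n\times\mathbb{R}^m\to\mathbb{R}$ such that for all $x,x_1,x_2,y,y_1,y_2$: $\|\nabla_x F(x_2, y)-\nabla_x F(x_1, y)\|\leq L_x\|x_2-x_1\|$; $\|\nabla_y F(x, y_2)-\nabla_y F(x, y_1)\|\leq L_y\|y_2-y_1\|$; $\|\nabla_x F(x, y_2)-\nabla_x F(x, y_1)\|\leq L_{xy}\|y_2-y_1\|$; $\|\nabla_y F(x_2, y)-\nabla_y F(x_1, y)\|\leq L_{xy}\|x_2-x_1\|$; $F(\cdot, y)-\tfrac{\mu_x}{2}\|\cdot\|^2$ convex for every $y$ and $F(x,\cdot)+\tfrac{\mu_y}{2}\|\cdot\|^2$ concave for every $x$. *)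

theory Defs
  imports "HOL-Analysis.Analysis"
begin

definition FClass ::
  "(real^'n \<Rightarrow> real^'m \<Rightarrow> real) \<Rightarrow> (real^'n \<Rightarrow> real^'m \<Rightarrow> real^'n) \<Rightarrow> (real^'n \<Rightarrow> real^'m \<Rightarrow> real^'m)
   \<Rightarrow> real \<Rightarrow> real \<Rightarrow> real \<Rightarrow> real \<Rightarrow> real \<Rightarrow> bool" where
  "FClass F gx gy Lx Ly Lxy mux muy \<longleftrightarrow>
     (\<forall>x y. (\<lambda>p. F (fst p) (snd p)) differentiable (at (x, y))) \<and>
     (\<forall>x y. ((\<lambda>u. F u y) has_derivative (\<lambda>h. gx x y \<bullet> h)) (at x)) \<and>
     (\<forall>x y. ((\<lambda>v. F x v) has_derivative (\<lambda>h. gy x y \<bullet> h)) (at y)) \<and>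
     (\<forall>x1 x2 y. norm (gx x2 y - gx x1 y) \<le> Lx * norm (x2 - x1)) \<and>
     (\<forall>x y1 y2. norm (gy x y2 - gy x y1) \<le> Ly * norm (y2 - y1)) \<and>
     (\<forall>x y1 y2. norm (gx x y2 - gx x y1) \<le> Lxy * norm (y2 - y1)) \<and>
     (\<forall>x1 x2 y. norm (gy x2 y - gy x1 y) \<le> Lxy * norm (x2 - x1)) \<and>
     (\<forall>y. convex_on UNIV (\<lambda>x. F x y - mux / 2 * (norm x)\<^sup>2)) \<and>
     (\<forall>x. concave_on UNIV (\<lambda>y. F x y + muy / 2 * (norm y)\<^sup>2))"

end

theory Submission
  imports Defs
begin

lemma cs_sqrt:
  fixes p q u v :: real
  assumes "p^2 + q^2 = 1"
  shows "p * u + q * v \<le> sqrt (u^2 + v^2)"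
proof -
  have "(p * u+q * v)^2 + (p * v - q * u)^2 = (p^2+q^2) * (u^2+v^2)" by algebra
  hence "(p * u+q * v)^2 \<le> u^2+v^2" using assms by (metis mult_1 le_add_same_cancel1 zero_le_power2)
  thus ?thesis by (rule real_le_rsqrt)
qed

lemma key:
  fixes L \<mu> c s :: real
  assumes hL: "\<mu> \<le> L" and hmu: "0 < \<mu>" and hc: "0 \<le> c" and hs: "0 < s"
    and hs2: "s^2 = c^2 + L * \<mu>"
  defines "ts \<equiv> 2 * ((L + \<mu>) * s + c * (\<mu> - L)) / ((4 * c^2 + (L + \<mu>)^2) * s)"
  defines "\<alpha> \<equiv> (\<lambda>t::real. 1 + (1/2) * (L^2 + \<mu>^2 + 2 * c^2) * t^2 - (L + \<mu>) * t
              + (1/2) * (L - \<mu>) * t * sqrt ((L * t + \<mu> * t - 2)^2 + 4 * c^2 * t^2))"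
  shows "0 \<le> ts \<and> ts \<le> 2 * \<mu> / (\<mu> * L + c^2) \<and>
    \<alpha> ts = 1 - s^2 * ts^2 \<and>
    (\<forall>t\<ge>0. 1 - s^2 * ts^2 + s^2 * (t-ts)^2 \<le> \<alpha> t) \<and>
    1 - s^2 * ts^2 = (8 * c * (L^2 - \<mu>^2) * s + (L^2 - \<mu>^2)^2
                     + 16 * c^2 * s^2) / (((L + \<mu>)^2 + 4 * c^2)^2)"
proof -
  define a where "a = L + \<mu>"
  define b where "b = L - \<mu>"
  define N where "N = 4 * c^2 + a^2"
  have ha: "a > 0" using hL hmu by (simp add: a_def)
  have hb: "b \<ge> 0" using hL by (simp add: b_def)
  have hN: "N > 0" using ha hc by (simp add: N_def add_nonneg_pos)
  have tsd: "ts = 2 * (a * s - b * c)/(N * s)" unfolding ts_def a_def b_def N_def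
    by (simp add: algebra_simps)
  have Nts: "N * s * ts = 2 * (a * s - b * c)" using tsd hN hs by simp
  define p where "p = -(4 * c * s+a * b)/N"
  define q where "q = 2 * (a * s-c * b)/N"
  have Np: "N * p = -(4 * c * s+a * b)" using hN by (simp add: p_def)
  have Nq: "N * q = 2 * (a * s-c * b)" using hN by (simp add: q_def)
  have w: "(4 * c * s+a * b)^2 + 4 * (a * s-c * b)^2 = N^2"
    using hs2 unfolding N_def a_def b_def by algebra
  have pq: "p^2 + q^2 = 1"
  proof -
    have "N^2 * (p^2 + q^2) = N^2 * 1" using Np Nq w by algebra
    thus ?thesis using hN by (metis mult_left_cancel power_not_zero less_irrefl)
  qed
  have Kb: "(L^2 + \<mu>^2 + 2 * c^2) - b^2 = 2 * s^2" using hs2 unfolding b_def by algebra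
  have apb: "a + b * p = 2 * s^2 * ts"
  proof -
    have "a * N - b * (4 * c * s+a * b) = 4 * s * (a * s-b * c)"
      using hs2 unfolding N_def a_def b_def by algebra
    hence "N * (a + b * p) = N * (2 * s^2 * ts)" using Np Nts by algebra
    thus ?thesis using hN by (metis mult_left_cancel less_irrefl)
  qed
  have pa: "p * a + q * (2 * c) = -b"
  proof -
    have "-(4 * c * s+a * b) * a + 2 * (a * s-c * b) * (2 * c) = -b * N" unfolding N_def by algebra
    hence "N * (p * a + q * (2 * c)) = N * (-b)" using Np Nq by algebra
    thus ?thesis using hN by (metis mult_left_cancel less_irrefl)
  qed
  have eq: "\<alpha> t = 1 - s^2 * ts^2 + s^2 * (t-ts)^2 + (1/2) * b * t * (sqrt ((a * t-2)^2 + (2 * c * t)^2) - (p * (a * t-2) + q * (2 * c * t)))" for t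
  proof -
    have e1: "p * (a * t-2) + q * (2 * c * t) = -b * t - 2 * p"
    proof -
      have "p * (a * t-2) + q * (2 * c * t) = (p * a + q * (2 * c)) * t - 2 * p" by algebra
      thus ?thesis using pa by simp
    qed
    have sq: "(L * t + \<mu> * t - 2)^2 + 4 * c^2 * t^2 = (a * t-2)^2 + (2 * c * t)^2"
      unfolding a_def by algebra
    have "\<alpha> t = 1 + (1/2) * (L^2 + \<mu>^2 + 2 * c^2) * t^2 - a * t
              + (1/2) * b * t * sqrt ((a * t-2)^2 + (2 * c * t)^2)"
      unfolding \<alpha>_def sq by (simp add: a_def b_def)
    also have "... = 1 + (1/2) * ((L^2 + \<mu>^2 + 2 * c^2) - b^2) * t^2 - (a + b * p) * t
              + (1/2) * b * t * (sqrt ((a * t-2)^2 + (2 * c * t)^2) - (p * (a * t-2) + q * (2 * c * t)))"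
      unfolding e1 by algebra
    also have "... = 1 - s^2 * ts^2 + s^2 * (t-ts)^2
              + (1/2) * b * t * (sqrt ((a * t-2)^2 + (2 * c * t)^2) - (p * (a * t-2) + q * (2 * c * t)))"
      unfolding Kb apb by algebra
    finally show ?thesis .
  qed
  have low: "\<forall>t\<ge>0. 1 - s^2 * ts^2 + s^2 * (t-ts)^2 \<le> \<alpha> t"
  proof (intro allI impI)
    fix t :: real assume t: "t \<ge> 0"
    have "0 \<le> sqrt ((a * t-2)^2 + (2 * c * t)^2) - (p * (a * t-2) + q * (2 * c * t))"
      using cs_sqrt[OF pq] by simp
    moreover have "0 \<le> (1/2) * b * t" using hb t by simp
    ultimately show "1 - s^2 * ts^2 + s^2 * (t-ts)^2 \<le> \<alpha> t" unfolding eq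
      by (simp add: mult_nonneg_nonneg)
  qed
  have at: "\<alpha> ts = 1 - s^2 * ts^2"
  proof -
    define k where "k = 2 * c/s"
    have hk: "k \<ge> 0" using hc hs by (simp add: k_def)
    have u: "a * ts - 2 = k * p"
    proof -
      have "s * N * (a * ts-2) = s * N * (k * p)"
      proof -
        have "s * k = 2 * c" using hs by (simp add: k_def)
        thus ?thesis using Nts Np unfolding N_def by algebra
      qed
      thus ?thesis using hN hs by (metis mult_left_cancel mult_pos_pos less_irrefl)
    qed
    have v: "2 * c * ts = k * q"
    proof -
      have "s * N * (2 * c * ts) = s * N * (k * q)"
      proof -
        have "s * k = 2 * c" using hs by (simp add: k_def)
        thus ?thesis using Nts Nq by algebra
      qed
      thus ?thesis using hN hs by (metis mult_left_cancel mult_pos_pos less_irrefl)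
    qed
    have "(k * p)^2 + (k * q)^2 = k^2" using pq by algebra
    hence "sqrt ((a * ts-2)^2 + (2 * c * ts)^2) = k" unfolding u v using hk by simp
    moreover have "p * (a * ts-2) + q * (2 * c * ts) = k" unfolding u v using pq by algebra
    ultimately show ?thesis unfolding eq by simp
  qed
  have cs: "c \<le> s"
  proof -
    have "c^2 \<le> s^2" using hs2 hL hmu by (simp add: mult_nonneg_nonneg)
    thus ?thesis using hs by (simp add: power2_le_iff_abs_le abs_le_iff)
  qed
  have nn: "0 \<le> a * s - b * c"
  proof -
    have "b \<le> a" using hmu by (simp add: a_def b_def)
    hence "b * c \<le> a * s" using cs hb hc by (simp add: mult_mono)
    thus ?thesis by simp
  qed
  have ts0: "0 \<le> ts" unfolding tsd using nn hN hs by simp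
  have tsup: "ts \<le> 2 * \<mu> / (\<mu> * L + c^2)"
  proof -
    have "\<mu> * N - (a * s-b * c) * s = 2 * \<mu> * c^2 + a * \<mu>^2 + b * c * (s-c)"
      using hs2 unfolding N_def a_def b_def by algebra
    moreover have "0 \<le> 2 * \<mu> * c^2 + a * \<mu>^2 + b * c * (s-c)"
      using hmu ha hb hc cs by (simp add: mult_nonneg_nonneg add_nonneg_nonneg)
    ultimately have "(a * s-b * c) * s \<le> \<mu> * N" by linarith
    moreover have "ts * s^2 * N = 2 * (a * s-b * c) * s" using Nts by algebra
    ultimately have "ts * s^2 * N \<le> (2 * \<mu>) * N" by linarith
    hence "ts * s^2 \<le> 2 * \<mu>" using hN by simp
    hence "ts \<le> 2 * \<mu>/s^2" using hs by (simp add: pos_le_divide_eq)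
    moreover have "\<mu> * L + c^2 = s^2" using hs2 by simp
    ultimately show ?thesis by simp
  qed
  have fin: "1 - s^2 * ts^2 = (8 * c * (L^2 - \<mu>^2) * s + (L^2 - \<mu>^2)^2
                     + 16 * c^2 * s^2) / (((L + \<mu>)^2 + 4 * c^2)^2)"
  proof -
    have N2: "((L + \<mu>)^2 + 4 * c^2) = N" unfolding N_def a_def by simp
    have "N^2 * (1 - s^2 * ts^2) = 8 * c * (L^2 - \<mu>^2) * s + (L^2 - \<mu>^2)^2 + 16 * c^2 * s^2"
      using Nts w unfolding a_def b_def by algebra
    thus ?thesis unfolding N2 using hN by (simp add: field_simps)
  qed
  show ?thesis using ts0 tsup at low fin by blast
qed

theorem proposition2p3:
  fixes F :: "real^'n \<Rightarrow> real^'m \<Rightarrow> real"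
    and gx :: "real^'n \<Rightarrow> real^'m \<Rightarrow> real^'n"
    and gy :: "real^'n \<Rightarrow> real^'m \<Rightarrow> real^'m"
    and Lx Ly Lxy mux muy :: real
  assumes "Lx > 0" "Ly > 0" "Lxy \<ge> 0"
    and "0 < mux" "mux \<le> Lx" "0 < muy" "muy \<le> Ly"
    and "FClass F gx gy Lx Ly Lxy mux muy"
  defines "L \<equiv> max Lx Ly"
    and "\<mu> \<equiv> min mux muy"
  defines "\<alpha> \<equiv> (\<lambda>t::real. 1 + (1/2) * (L^2 + \<mu>^2 + 2 * Lxy^2) * t^2 - (L + \<mu>) * t
              + (1/2) * (L - \<mu>) * t * sqrt ((L * t + \<mu> * t - 2)^2 + 4 * Lxy^2 * t^2))"
    and "D \<equiv> {0 .. 2 * \<mu> / (\<mu> * L + Lxy^2)}"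
    and "tstar \<equiv> 2 * ((L + \<mu>) * sqrt (Lxy^2 + L * \<mu>) + Lxy * (\<mu> - L))
                 / ((4 * Lxy^2 + (L + \<mu>)^2) * sqrt (Lxy^2 + L * \<mu>))"
  shows "tstar \<in> D \<and> (\<forall>t\<in>D. t \<noteq> tstar \<longrightarrow> \<alpha> tstar < \<alpha> t) \<and>
         \<alpha> tstar = (8 * Lxy * (L^2 - \<mu>^2) * sqrt (L * \<mu> + Lxy^2) + (L^2 - \<mu>^2)^2
                     + 16 * Lxy^2 * (L * \<mu> + Lxy^2)) / (((L + \<mu>)^2 + 4 * Lxy^2)^2)"
  proof -
  have hmuL: "\<mu> \<le> L" unfolding L_def \<mu>_def using assms(5) by linarith
  have hmu: "0 < \<mu>" unfolding \<mu>_def using assms(4,6) by simp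
  have hLmu: "0 < L * \<mu>" using hmu hmuL by simp
  define s where "s = sqrt (Lxy^2 + L * \<mu>)"
  have hs: "0 < s" unfolding s_def using hLmu by (simp add: add_nonneg_pos)
  have hs2: "s^2 = Lxy^2 + L*\<mu>" unfolding s_def using hLmu by simp
  have K: "0 \<le> tstar \<and> tstar \<le> 2 * \<mu> / (\<mu> * L + Lxy^2) \<and>
    \<alpha> tstar = 1 - s^2 * tstar^2 \<and>
    (\<forall>t\<ge>0. 1 - s^2*tstar^2 + s^2*(t-tstar)^2 \<le> \<alpha> t) \<and>
    1 - s^2 * tstar^2 = (8 * Lxy * (L^2 - \<mu>^2) * s + (L^2 - \<mu>^2)^2
                     + 16 * Lxy^2 * s^2) / (((L + \<mu>)^2 + 4 * Lxy^2)^2)"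
    using key[OF hmuL hmu assms(3) hs hs2] unfolding tstar_def \<alpha>_def s_def .
  have s': "sqrt (L * \<mu> + Lxy^2) = s" unfolding s_def by (simp add: add.commute)
  have A: "tstar \<in> D" using K unfolding D_def by simp
  have B: "\<forall>t\<in>D. t \<noteq> tstar \<longrightarrow> \<alpha> tstar < \<alpha> t"
  proof (intro ballI impI)
    fix t assume t: "t \<in> D" "t \<noteq> tstar"
    hence t0: "0 \<le> t" unfolding D_def by simp
    have "0 < s^2*(t-tstar)^2" using hs t(2) by simp
    thus "\<alpha> tstar < \<alpha> t" using K t0 by force
  qed
  have C: "\<alpha> tstar = (8 * Lxy * (L^2 - \<mu>^2) * sqrt (L * \<mu> + Lxy^2) + (L^2 - \<mu>^2)^2
                     + 16 * Lxy^2 * (L * \<mu> + Lxy^2)) / (((L + \<mu>)^2 + 4 * Lxy^2)^2)"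
    unfolding s' using K hs2 by (simp add: add.commute)
  show ?thesis using A B C by blast
qed

end
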